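(* In the setting of the context, assume $G_{xy}^{[1]}=1$, $G_x/G_x^{[1]}\cong S_5$ and $G_x^{[1]}\cong S_4$. Then $G_x\cong S_5\times S_4$ and $G_e\cong S_4\wr C_2$.
   Context: $\mathcal{A}=(G_x,G_e,G_{xy})$ is a finite, primitive amalgam of degree $(5,2)$ (no nontrivial subgroup of $G_{xy}$ normal in both $G_x$ and $G_e$; $|G_x:G_{xy}|=5$, $|G_e:G_{xy}|=2$), $G=G_x*_{G_{xy}}G_e$ acts on the coset graph (5-valent tree) $\Gamma$, $x$ is the vertex with stabiliser $G_x$, $y$ the neighbour with $G_e$ the setwise stabiliser of $\{x,y\}$ and $G_x\cap G_y=G_{xy}$. $G_z^{[1]}$ is the pointwise stabiliser of $z$ and its neighbours, $G_{xy}^{[1]}=G_x^{[1]}\cap G_y^{[1]}$. *)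

theory Defs
  imports "HOL-Algebra.Algebra"
begin

text \<open>Kernel of the action of G on the right cosets of H (the neighbours of the vertex
  with stabiliser G in the coset graph): the pointwise stabiliser G^[1].\<close>
definition coset_action_kernel :: "('a, 'm) monoid_scheme \<Rightarrow> 'a set \<Rightarrow> 'a set" where
  "coset_action_kernel G H = {g \<in> carrier G. \<forall>C \<in> rcosets\<^bsub>G\<^esub> H. C #>\<^bsub>G\<^esub> g = C}"

text \<open>Wreath product H wr C_2 = (H x H) semidirect C_2, C_2 = bool under xor,
  the nontrivial element swapping the two coordinates.\<close>
definition wreath_C2 :: "('a, 'm) monoid_scheme \<Rightarrow> (('a \<times> 'a) \<times> bool) monoid" where
  "wreath_C2 H = \<lparr> carrier = {((a, b), s). a \<in> carrier H \<and> b \<in> carrier H},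
     monoid.mult = (\<lambda>x y. (if snd x
          then (fst (fst x) \<otimes>\<^bsub>H\<^esub> snd (fst y), snd (fst x) \<otimes>\<^bsub>H\<^esub> fst (fst y))
          else (fst (fst x) \<otimes>\<^bsub>H\<^esub> fst (fst y), snd (fst x) \<otimes>\<^bsub>H\<^esub> snd (fst y)),
        snd x \<noteq> snd y)),
     monoid.one = ((\<one>\<^bsub>H\<^esub>, \<one>\<^bsub>H\<^esub>), False) \<rparr>"

end

theory Submission
  imports Defs "HOL-Computational_Algebra.Primes"
begin


lemma (in group) cancel_l1 [simp]: "x \<in> carrier G \<Longrightarrow> y \<in> carrier G \<Longrightarrow> x \<otimes> (inv x \<otimes> y) = y"
  by (simp add: m_assoc[symmetric])
lemma (in group) cancel_l2 [simp]: "x \<in> carrier G \<Longrightarrow> y \<in> carrier G \<Longrightarrow> inv x \<otimes> (x \<otimes> y) = y"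
  by (simp add: m_assoc[symmetric])

lemma (in group) cak_normal:
  assumes H: "subgroup H G"
  shows "coset_action_kernel G H \<lhd> G"
proof -
  let ?K = "coset_action_kernel G H"
  have Hs: "H \<subseteq> carrier G" using H subgroup.subset by blast
  have rc: "C \<subseteq> carrier G" if "C \<in> rcosets H" for C
    using that Hs r_coset_subset_G by (auto simp: RCOSETS_def)
  have rcg: "C #> g \<in> rcosets H" if "C \<in> rcosets H" "g \<in> carrier G" for C g
    using that Hs by (auto simp: RCOSETS_def coset_mult_assoc intro!: rcosetsI)
  have sub: "subgroup ?K G"
  proof
    show "?K \<subseteq> carrier G" by (auto simp: coset_action_kernel_def)
    show "\<one> \<in> ?K" using rc by (auto simp: coset_action_kernel_def)
    fix x y assume x: "x \<in> ?K" and y: "y \<in> ?K"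
    then show "x \<otimes> y \<in> ?K"
      by (auto simp: coset_action_kernel_def coset_mult_assoc[symmetric] rc)
  next
    fix x assume x: "x \<in> ?K"
    then have xc: "x \<in> carrier G" by (auto simp: coset_action_kernel_def)
    { fix C assume C: "C \<in> rcosets H"
      have "C #> inv x = (C #> x) #> inv x" using x C by (auto simp: coset_action_kernel_def)
      also have "\<dots> = C" using xc C rc by (simp add: coset_mult_assoc)
      finally have "C #> inv x = C" . }
    then show "inv x \<in> ?K" using xc by (auto simp: coset_action_kernel_def)
  qed
  show ?thesis
  proof (rule normal_invI[OF sub])
    fix g k assume g: "g \<in> carrier G" and k: "k \<in> ?K"
    then have kc: "k \<in> carrier G" by (auto simp: coset_action_kernel_def)
    { fix C assume C: "C \<in> rcosets H"
      have "C #> (g \<otimes> k \<otimes> inv g) = ((C #> g) #> k) #> inv g"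
        using C rc g kc by (simp add: coset_mult_assoc)
      also have "\<dots> = (C #> g) #> inv g" using k rcg[OF C g] by (auto simp: coset_action_kernel_def)
      also have "\<dots> = C" using C rc g by (simp add: coset_mult_assoc)
      finally have "C #> (g \<otimes> k \<otimes> inv g) = C" . }
    then show "g \<otimes> k \<otimes> inv g \<in> ?K" using g kc by (auto simp: coset_action_kernel_def)
  qed
qed

lemma (in group) cak_sub:
  assumes H: "subgroup H G"
  shows "coset_action_kernel G H \<subseteq> H"
proof
  fix k assume k: "k \<in> coset_action_kernel G H"
  have Hs: "H \<subseteq> carrier G" using H subgroup.subset by blast
  have "H \<in> rcosets H" using Hs by (metis coset_mult_one one_closed rcosetsI)
  then have "H #> k = H" using k by (auto simp: coset_action_kernel_def)
  then show "k \<in> H" using k H coset_join1 by (auto simp: coset_action_kernel_def)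
qed

lemma (in group) cak_normal_sub:
  assumes H: "H \<lhd> G"
  shows "H \<subseteq> coset_action_kernel G H"
proof
  fix h assume h: "h \<in> H"
  have sg: "subgroup H G" using H normal_imp_subgroup by blast
  have Hs: "H \<subseteq> carrier G" using sg subgroup.subset by blast
  have hc: "h \<in> carrier G" using h Hs by blast
  { fix C assume "C \<in> rcosets H"
    then obtain g where g: "g \<in> carrier G" "C = H #> g" by (auto simp: RCOSETS_def)
    have "C #> h = H #> (g \<otimes> h \<otimes> inv g) #> g"
      using g hc Hs by (simp add: coset_mult_assoc m_assoc)
    also have "H #> (g \<otimes> h \<otimes> inv g) = H"
      using coset_join2[OF _ sg normal_invE(2)[OF H g(1) h]] g hc by simp
    finally have "C #> h = C" using g by simp }
  then show "h \<in> coset_action_kernel G H" using hc by (auto simp: coset_action_kernel_def)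
qed

lemma S4_center:
  assumes p: "p permutes {1..4::nat}" and c: "\<And>q. q permutes {1..4} \<Longrightarrow> p \<circ> q = q \<circ> p"
  shows "p = id"
proof
  fix x
  show "p x = id x"
  proof (cases "x \<in> {1..4}")
    case False then show ?thesis using p by (simp add: permutes_not_in)
  next
    case True
    have key: "p x \<noteq> a" if "a \<in> {1..4}" "b \<in> {1..4}" "a \<noteq> b" "x \<noteq> a" "x \<noteq> b" for a b
    proof
      assume pa: "p x = a"
      have "(p \<circ> transpose a b) x = (transpose a b \<circ> p) x"
        using c[OF permutes_swap_id[OF that(1,2)]] by simp
      then show False using pa that by simp
    qed
    have px: "p x \<in> {1..4}" using permutes_in_image[OF p] True by blast
    have "x \<in> {1,2,3,4}" using True by auto
    moreover have "p x \<in> {1,2,3,4}" using px by auto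
    ultimately show ?thesis
      using key[of 1 2] key[of 1 3] key[of 2 1] key[of 2 3] key[of 3 1] key[of 3 2]
            key[of 4 1] key[of 4 2] key[of 2 4] key[of 1 4] key[of 3 4] key[of 4 3]
      by auto
  qed
qed

lemma card_sym_group: "card (carrier (sym_group n)) = fact n"
  by (simp add: sym_group_def card_permutations)

lemma prod5: "(r::nat) * m = 5 \<Longrightarrow> r = 1 \<or> m = 1"
  using prime_product[of r m] by simp




lemma (in group) index2_basic:
  assumes fin: "finite (carrier G)" and E: "subgroup E G" and idx: "card (rcosets E) = 2"
    and t: "t \<in> carrier G" "t \<notin> E"
  shows "\<And>x. x \<in> carrier G \<Longrightarrow> x \<notin> E \<Longrightarrow> x \<otimes> inv t \<in> E"
proof -
  fix x assume x: "x \<in> carrier G" "x \<notin> E"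
  have Es: "E \<subseteq> carrier G" using E subgroup.subset by blast
  have f: "finite (rcosets E)" using finite_subset[OF rcosets_subset_PowG[OF E]] fin by blast
  have m: "{E, E #> t, E #> x} \<subseteq> rcosets E"
    using Es t x rcosetsI[OF Es] rcosetsI[OF Es one_closed] by (simp add: coset_mult_one)
  have n1: "E #> t \<noteq> E" using t rcos_self[OF t(1) E] by auto
  have n2: "E #> x \<noteq> E" using x rcos_self[OF x(1) E] by auto
  have eq: "E #> x = E #> t"
  proof (rule ccontr)
    assume ne: "E #> x \<noteq> E #> t"
    have "card {E, E #> t, E #> x} = 3" using n1 n2 ne by auto
    moreover have "card {E, E #> t, E #> x} \<le> 2" using card_mono[OF f m] idx by simp
    ultimately show False by simp
  qed
  have "E #> (x \<otimes> inv t) = E" using coset_mult_inv2[OF eq x(1) t(1) Es] .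
  then show "x \<otimes> inv t \<in> E" using coset_join1 x t E by auto
qed

lemma (in group) index2_normal:
  assumes fin: "finite (carrier G)" and E: "subgroup E G" and idx: "card (rcosets E) = 2"
    and t: "t \<in> carrier G" "t \<notin> E"
  shows "E \<lhd> G" and "\<And>g. g \<in> carrier G \<Longrightarrow> g \<otimes> g \<in> E"
proof -
  have Es: "E \<subseteq> carrier G" using E subgroup.subset by blast
  note b = index2_basic[OF assms]
  have two: "x \<otimes> inv y \<in> E" if "x \<in> carrier G" "x \<notin> E" "y \<in> carrier G" "y \<notin> E" for x y
  proof -
    have "(x \<otimes> inv t) \<otimes> inv (y \<otimes> inv t) \<in> E"
      by (rule subgroup.m_closed[OF E b[OF that(1,2)] subgroup.m_inv_closed[OF E b[OF that(3,4)]]])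
    also have "(x \<otimes> inv t) \<otimes> inv (y \<otimes> inv t) = x \<otimes> inv y"
      using that t by (simp add: inv_mult_group m_assoc)
    finally show ?thesis .
  qed
  show sq: "g \<otimes> g \<in> E" if g: "g \<in> carrier G" for g
  proof (cases "g \<in> E")
    case True show ?thesis by (rule subgroup.m_closed[OF E True True])
  next
    case False
    have "inv g \<notin> E" using False g subgroup.m_inv_closed[OF E, of "inv g"] by auto
    then show ?thesis using two[OF g False, of "inv g"] g by simp
  qed
  show "E \<lhd> G"
  proof (rule normal_invI[OF E])
    fix g h assume g: "g \<in> carrier G" and h: "h \<in> E"
    have hc: "h \<in> carrier G" using h Es by blast
    show "g \<otimes> h \<otimes> inv g \<in> E"
    proof (cases "g \<in> E")
      case True show ?thesis by (intro subgroup.m_closed[OF E] subgroup.m_inv_closed[OF E] True h)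
    next
      case False
      show ?thesis
      proof (rule ccontr)
        assume nE: "g \<otimes> h \<otimes> inv g \<notin> E"
        have gh: "g \<otimes> h \<otimes> inv g \<otimes> inv g \<in> E" using two[OF _ nE g False] g hc by simp
        have "(g \<otimes> h \<otimes> inv g \<otimes> inv g) \<otimes> (g \<otimes> g) \<otimes> inv h \<in> E"
          by (rule subgroup.m_closed[OF E subgroup.m_closed[OF E gh sq[OF g]] subgroup.m_inv_closed[OF E h]])
        also have "(g \<otimes> h \<otimes> inv g \<otimes> inv g) \<otimes> (g \<otimes> g) \<otimes> inv h = g"
          using g hc by (simp add: m_assoc)
        finally show False using False by simp
      qed
    qed
  qed
qed




lemma iso_sym_closed:
  assumes h: "h \<in> iso G H"
    and cl: "\<And>x y. x \<in> carrier G \<Longrightarrow> y \<in> carrier G \<Longrightarrow> x \<otimes>\<^bsub>G\<^esub> y \<in> carrier G"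
  shows "H \<cong> G"
proof -
  have hh: "h \<in> hom G H" "bij_betw h (carrier G) (carrier H)"
    using h by (auto simp add: iso_def)
  then have HG: "bij_betw (inv_into (carrier G) h) (carrier H) (carrier G)"
    by (simp add: bij_betw_inv_into)
  have *: "\<And>x. x \<in> carrier H \<Longrightarrow> inv_into (carrier G) h x \<in> carrier G"
    by (meson HG bij_betwE)
  have "inv_into (carrier G) h \<in> hom H G"
    unfolding hom_def
  proof safe
    show "\<And>x. x \<in> carrier H \<Longrightarrow> inv_into (carrier G) h x \<in> carrier G" by (rule *)
    show "inv_into (carrier G) h (x \<otimes>\<^bsub>H\<^esub> y) = inv_into (carrier G) h x \<otimes>\<^bsub>G\<^esub> inv_into (carrier G) h y"
      if "x \<in> carrier H" "y \<in> carrier H" for x y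
    proof (rule inv_into_f_eq)
      show "inj_on h (carrier G)"
        using bij_betw_def hh(2) by blast
      show "inv_into (carrier G) h x \<otimes>\<^bsub>G\<^esub> inv_into (carrier G) h y \<in> carrier G"
        by (simp add: * cl that)
      show "h (inv_into (carrier G) h x \<otimes>\<^bsub>G\<^esub> inv_into (carrier G) h y) = x \<otimes>\<^bsub>H\<^esub> y"
        using hh bij_betw_inv_into_right [of h] unfolding hom_def by (simp add: "*" that)
    qed
  qed
  then show ?thesis
    unfolding is_iso_def iso_def using HG by blast
qed

locale wr_setup = group G for G (structure) +
  fixes E t A B
  assumes fin: "finite (carrier G)" and E: "subgroup E G" and idx: "card (rcosets E) = 2"
    and t: "t \<in> carrier G" "t \<notin> E"
    and A: "subgroup A G" "A \<subseteq> E"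
    and nA: "\<And>e a. e \<in> E \<Longrightarrow> a \<in> A \<Longrightarrow> e \<otimes> a \<otimes> inv e \<in> A"
    and B_def: "B = (\<lambda>y. inv t \<otimes> y \<otimes> t) ` A"
    and AB: "\<And>x. x \<in> A \<Longrightarrow> x \<in> B \<Longrightarrow> x = \<one>"
    and cardE: "card E = card A * card A"
begin

lemma Es: "E \<subseteq> carrier G" using E subgroup.subset by blast
lemma As: "A \<subseteq> carrier G" using A(1) subgroup.subset by blast
lemma Ec: "x \<in> E \<Longrightarrow> x \<in> carrier G" using Es by blast
lemma Ac: "x \<in> A \<Longrightarrow> x \<in> carrier G" using As by blast

lemma EN: "E \<lhd> G" and sq: "g \<in> carrier G \<Longrightarrow> g \<otimes> g \<in> E"
  using index2_normal[OF fin E idx t] by auto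

lemma conjE: "g \<in> carrier G \<Longrightarrow> e \<in> E \<Longrightarrow> g \<otimes> e \<otimes> inv g \<in> E"
  using normal_invE(2)[OF EN] by blast

lemma Bmem: "a \<in> A \<Longrightarrow> inv t \<otimes> a \<otimes> t \<in> B" using B_def by blast

lemma BE: "b \<in> B \<Longrightarrow> b \<in> E"
proof -
  assume "b \<in> B"
  then obtain a where a: "a \<in> A" "b = inv t \<otimes> a \<otimes> t" using B_def by blast
  have "inv t \<otimes> a \<otimes> inv (inv t) \<in> E" using conjE[of "inv t" a] a A(2) t by blast
  then show "b \<in> E" using a t by simp
qed

lemma Bc: "b \<in> B \<Longrightarrow> b \<in> carrier G" using BE Ec by blast

lemma Amul: "a \<in> A \<Longrightarrow> a' \<in> A \<Longrightarrow> a \<otimes> a' \<in> A" using subgroup.m_closed[OF A(1)] by blast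
lemma Ainv: "a \<in> A \<Longrightarrow> inv a \<in> A" using subgroup.m_inv_closed[OF A(1)] by blast

lemma Bmul: "b \<in> B \<Longrightarrow> b' \<in> B \<Longrightarrow> b \<otimes> b' \<in> B"
proof -
  assume "b \<in> B" "b' \<in> B"
  then obtain a a' where a: "a \<in> A" "b = inv t \<otimes> a \<otimes> t" "a' \<in> A" "b' = inv t \<otimes> a' \<otimes> t"
    using B_def by blast
  have "b \<otimes> b' = inv t \<otimes> (a \<otimes> a') \<otimes> t" using a t Ac by (simp add: m_assoc)
  then show ?thesis using Bmem[OF Amul[OF a(1,3)]] by simp
qed

lemma Binv: "b \<in> B \<Longrightarrow> inv b \<in> B"
proof -
  assume "b \<in> B"
  then obtain a where a: "a \<in> A" "b = inv t \<otimes> a \<otimes> t" using B_def by blast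
  have "inv b = inv t \<otimes> inv a \<otimes> t" using a t Ac by (simp add: inv_mult_group m_assoc)
  then show ?thesis using Bmem[OF Ainv[OF a(1)]] by simp
qed

lemma nB: "e \<in> E \<Longrightarrow> b \<in> B \<Longrightarrow> e \<otimes> b \<otimes> inv e \<in> B"
proof -
  assume e: "e \<in> E" and "b \<in> B"
  then obtain a where a: "a \<in> A" "b = inv t \<otimes> a \<otimes> t" using B_def by blast
  define e' where "e' = t \<otimes> e \<otimes> inv t"
  have e': "e' \<in> E" using conjE[OF t(1) e] e'_def by simp
  have "e \<otimes> b \<otimes> inv e = inv t \<otimes> (e' \<otimes> a \<otimes> inv e') \<otimes> t"
    using a t Ac Ec[OF e] by (simp add: e'_def inv_mult_group m_assoc)
  then show ?thesis using Bmem[OF nA[OF e' a(1)]] by simp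
qed

lemma comm: "a \<in> A \<Longrightarrow> b \<in> B \<Longrightarrow> b \<otimes> a = a \<otimes> b"
proof -
  assume a: "a \<in> A" and b: "b \<in> B"
  note ac = Ac[OF a] and bc = Bc[OF b]
  define c where "c = a \<otimes> b \<otimes> inv a \<otimes> inv b"
  have "c = a \<otimes> (b \<otimes> inv a \<otimes> inv b)" using ac bc by (simp add: c_def m_assoc)
  moreover have "b \<otimes> inv a \<otimes> inv b \<in> A" using nA[OF BE[OF b] Ainv[OF a]] .
  ultimately have cA: "c \<in> A" using Amul[OF a] by simp
  have "c = (a \<otimes> b \<otimes> inv a) \<otimes> inv b" using ac bc by (simp add: c_def m_assoc)
  moreover have "a \<otimes> b \<otimes> inv a \<in> B" using nB[OF A(2)[THEN subsetD, OF a] b] .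
  ultimately have cB: "c \<in> B" using Bmul Binv[OF b] by simp
  have c1: "c = \<one>" using AB[OF cA cB] .
  have "a \<otimes> b = c \<otimes> (b \<otimes> a)" using ac bc by (simp add: c_def m_assoc)
  then show "b \<otimes> a = a \<otimes> b" using c1 ac bc by simp
qed

lemma comm_lc: "a \<in> A \<Longrightarrow> b \<in> B \<Longrightarrow> z \<in> carrier G \<Longrightarrow> b \<otimes> (a \<otimes> z) = a \<otimes> (b \<otimes> z)"
  using comm[of a b] Ac Bc by (metis m_assoc)

lemma uniq:
  assumes "a1 \<in> A" "a2 \<in> A" "b1 \<in> B" "b2 \<in> B" "a1 \<otimes> b1 = a2 \<otimes> b2"
  shows "a1 = a2 \<and> b1 = b2"
proof -
  note c = Ac[OF assms(1)] Ac[OF assms(2)] Bc[OF assms(3)] Bc[OF assms(4)]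
  have "inv a2 \<otimes> a1 = inv a2 \<otimes> (a1 \<otimes> b1) \<otimes> inv b1" using c by (simp add: m_assoc)
  also have "\<dots> = b2 \<otimes> inv b1" using c assms(5) by (simp add: m_assoc)
  finally have eq: "inv a2 \<otimes> a1 = b2 \<otimes> inv b1" .
  have "inv a2 \<otimes> a1 = \<one>"
    using AB[OF Amul[OF Ainv[OF assms(2)] assms(1)]] eq Bmul[OF assms(4) Binv[OF assms(3)]] by simp
  then have "a1 = a2" using c by (metis cancel_l1 r_one)
  then show ?thesis using assms(5) c by simp
qed

lemma finE: "finite E" using fin Es finite_subset by blast
lemma finA: "finite A" using fin As finite_subset by blast

lemma cardB: "card B = card A"
proof -
  have "inj_on (\<lambda>y. inv t \<otimes> y \<otimes> t) A"
    by (rule inj_onI) (use t Ac in \<open>simp add: m_assoc\<close>)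
  then show ?thesis using B_def card_image by blast
qed

lemma decomp: "e \<in> E \<Longrightarrow> \<exists>a\<in>A. \<exists>b\<in>B. e = a \<otimes> b"
proof -
  assume e: "e \<in> E"
  let ?mu = "\<lambda>(a, b). a \<otimes> b"
  have inj: "inj_on ?mu (A \<times> B)"
    by (rule inj_onI) (use uniq in auto)
  have sub: "?mu ` (A \<times> B) \<subseteq> E"
    using A(2) BE subgroup.m_closed[OF E] by auto
  have "card (?mu ` (A \<times> B)) = card E"
    using card_image[OF inj] cardB cardE by (simp add: card_cartesian_product)
  then have "?mu ` (A \<times> B) = E" using card_subset_eq[OF finE sub] by simp
  then show ?thesis using e by force
qed

end




context wr_setup
begin

lemma exists_s: "\<exists>s. s \<in> carrier G \<and> s \<notin> E \<and> s \<otimes> s = \<one> \<and> (\<forall>a\<in>A. s \<otimes> a \<otimes> s \<in> B)"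
proof -
  have tt: "t \<otimes> t \<in> E" using sq[OF t(1)] .
  obtain a0 b0 where ab: "a0 \<in> A" "b0 \<in> B" "t \<otimes> t = a0 \<otimes> b0" using decomp[OF tt] by blast
  note c = Ac[OF ab(1)] Bc[OF ab(2)]
  obtain a1 where a1: "a1 \<in> A" "b0 = inv t \<otimes> a1 \<otimes> t" using ab(2) B_def by blast
  note a1c = Ac[OF a1(1)]
  define a' where "a' = inv t \<otimes> b0 \<otimes> t"
  define b' where "b' = inv t \<otimes> a0 \<otimes> t"
  have a'A: "a' \<in> A"
  proof -
    have "(inv t \<otimes> inv t) \<otimes> a1 \<otimes> inv (inv t \<otimes> inv t) \<in> A"
      using nA[OF sq[of "inv t"] a1(1)] t by simp
    moreover have "(inv t \<otimes> inv t) \<otimes> a1 \<otimes> inv (inv t \<otimes> inv t) = a'"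
      using t a1c by (simp add: a'_def a1(2) inv_mult_group m_assoc)
    ultimately show ?thesis by simp
  qed
  have b'B: "b' \<in> B" using Bmem[OF ab(1)] b'_def by simp
  have "a0 \<otimes> b0 = inv t \<otimes> (a0 \<otimes> b0) \<otimes> t" using ab(3)[symmetric] t by (simp add: m_assoc)
  also have "\<dots> = b' \<otimes> a'" using t c by (simp add: a'_def b'_def m_assoc)
  also have "\<dots> = a' \<otimes> b'" using comm[OF a'A b'B] .
  finally have "a0 = a' \<and> b0 = b'" using uniq[OF ab(1) a'A ab(2) b'B] by simp
  then have key: "b0 = inv t \<otimes> a0 \<otimes> t" using b'_def by simp
  define s where "s = t \<otimes> inv a0"
  have sc: "s \<in> carrier G" using t c by (simp add: s_def)
  have sE: "s \<notin> E"
  proof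
    assume "s \<in> E"
    then have "s \<otimes> a0 \<in> E" using subgroup.m_closed[OF E] A(2) ab(1) by blast
    moreover have "s \<otimes> a0 = t" using t c by (simp add: s_def m_assoc)
    ultimately show False using t by simp
  qed
  have kinv: "inv t \<otimes> inv a0 \<otimes> t = inv b0" using key t c by (simp add: inv_mult_group m_assoc)
  have "s \<otimes> s = (t \<otimes> t) \<otimes> (inv t \<otimes> inv a0 \<otimes> t) \<otimes> inv a0"
    using t c by (simp add: s_def m_assoc)
  also have "\<dots> = \<one>" using ab(3) kinv c by (simp add: m_assoc)
  finally have ss: "s \<otimes> s = \<one>" .
  have invs: "inv s = s" using inv_equality[OF ss sc sc] .
  have sAs: "s \<otimes> a \<otimes> s \<in> B" if a: "a \<in> A" for a
  proof -
    note ac = Ac[OF a]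
    have i: "inv a0 \<otimes> a \<otimes> inv (inv a0) \<in> A" using nA[OF A(2)[THEN subsetD, OF Ainv[OF ab(1)]] a] .
    have a3: "(t \<otimes> t) \<otimes> (inv a0 \<otimes> a \<otimes> inv (inv a0)) \<otimes> inv (t \<otimes> t) \<in> A"
      using nA[OF tt i] .
    have "s \<otimes> a \<otimes> s = s \<otimes> a \<otimes> inv s" using invs by simp
    also have "\<dots> = inv t \<otimes> ((t \<otimes> t) \<otimes> (inv a0 \<otimes> a \<otimes> inv (inv a0)) \<otimes> inv (t \<otimes> t)) \<otimes> t"
      using t c ac by (simp add: s_def inv_mult_group m_assoc)
    finally show ?thesis using Bmem[OF a3] by simp
  qed
  show ?thesis using sc sE ss sAs by blast
qed

lemma cardG: "card (carrier G) = 2 * card E"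
  using lagrange[OF E] idx by (simp add: order_def)

lemma wreath_iso:
  assumes Hg: "group H" and f: "f \<in> hom H G" "inj_on f (carrier H)" "f ` carrier H = A"
  shows "G \<cong> wreath_C2 H"
proof -
  obtain s where s: "s \<in> carrier G" "s \<notin> E" "s \<otimes> s = \<one>" "\<And>a. a \<in> A \<Longrightarrow> s \<otimes> a \<otimes> s \<in> B"
    using exists_s by blast
  interpret H: group H by (rule Hg)
  define g where "g = (\<lambda>q. s \<otimes> f q \<otimes> s)"
  have fA: "p \<in> carrier H \<Longrightarrow> f p \<in> A" for p using f(3) by blast
  have fc: "p \<in> carrier H \<Longrightarrow> f p \<in> carrier G" for p using Ac fA by blast
  have gB: "q \<in> carrier H \<Longrightarrow> g q \<in> B" for q using s(4) fA g_def by simp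
  have gc: "q \<in> carrier H \<Longrightarrow> g q \<in> carrier G" for q using Bc gB by blast
  have fm: "p \<in> carrier H \<Longrightarrow> c \<in> carrier H \<Longrightarrow> f (p \<otimes>\<^bsub>H\<^esub> c) = f p \<otimes> f c" for p c
    using f(1) by (simp add: hom_mult)
  have ss': "z \<in> carrier G \<Longrightarrow> s \<otimes> (s \<otimes> z) = z" for z using s by (simp add: m_assoc[symmetric])
  have gm: "g (p \<otimes>\<^bsub>H\<^esub> c) = g p \<otimes> g c" if "p \<in> carrier H" "c \<in> carrier H" for p c
  proof -
    show ?thesis using that s fc fm by (simp add: g_def m_assoc ss')
  qed
  have sf: "p \<in> carrier H \<Longrightarrow> z \<in> carrier G \<Longrightarrow> s \<otimes> (f p \<otimes> z) = g p \<otimes> (s \<otimes> z)" for p z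
    using s fc ss' by (simp add: g_def m_assoc)
  have sg: "p \<in> carrier H \<Longrightarrow> z \<in> carrier G \<Longrightarrow> s \<otimes> (g p \<otimes> z) = f p \<otimes> (s \<otimes> z)" for p z
    using s fc ss' by (simp add: g_def m_assoc)
  have sf': "p \<in> carrier H \<Longrightarrow> s \<otimes> f p = g p \<otimes> s" for p
    using sf[of p \<one>] s fc gc by simp
  have sg': "p \<in> carrier H \<Longrightarrow> s \<otimes> g p = f p \<otimes> s" for p
    using sg[of p \<one>] s fc gc by simp
  have cm: "p \<in> carrier H \<Longrightarrow> q \<in> carrier H \<Longrightarrow> g q \<otimes> f p = f p \<otimes> g q" for p q
    using comm fA gB by blast
  have cml: "p \<in> carrier H \<Longrightarrow> q \<in> carrier H \<Longrightarrow> z \<in> carrier G \<Longrightarrow> g q \<otimes> (f p \<otimes> z) = f p \<otimes> (g q \<otimes> z)" for p q z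
    using comm_lc fA gB by blast
  define Psi where "Psi = (\<lambda>x. f (fst (fst x)) \<otimes> g (snd (fst x)) \<otimes> (if snd x then s else \<one>))"
  have Wc: "carrier (wreath_C2 H) = (carrier H \<times> carrier H) \<times> UNIV"
    by (auto simp: wreath_C2_def)
  have Wm: "x \<otimes>\<^bsub>wreath_C2 H\<^esub> y = (if snd x
          then (fst (fst x) \<otimes>\<^bsub>H\<^esub> snd (fst y), snd (fst x) \<otimes>\<^bsub>H\<^esub> fst (fst y))
          else (fst (fst x) \<otimes>\<^bsub>H\<^esub> fst (fst y), snd (fst x) \<otimes>\<^bsub>H\<^esub> snd (fst y)),
        snd x \<noteq> snd y)" for x y
    by (simp add: wreath_C2_def)
  have Psic: "x \<in> carrier (wreath_C2 H) \<Longrightarrow> Psi x \<in> carrier G" for x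
    using fc gc s by (auto simp: Psi_def Wc)
  have hom: "Psi \<in> hom (wreath_C2 H) G"
  proof (rule homI)
    show "Psi x \<in> carrier G" if "x \<in> carrier (wreath_C2 H)" for x using Psic that .
    fix x y assume x: "x \<in> carrier (wreath_C2 H)" and y: "y \<in> carrier (wreath_C2 H)"
    obtain p q e1 where xx: "x = ((p, q), e1)" "p \<in> carrier H" "q \<in> carrier H" using x Wc by auto
    obtain c d e2 where yy: "y = ((c, d), e2)" "c \<in> carrier H" "d \<in> carrier H" using y Wc by auto
    show "Psi (x \<otimes>\<^bsub>wreath_C2 H\<^esub> y) = Psi x \<otimes> Psi y"
      using xx yy s fc gc
      by (cases e1; cases e2) (simp_all add: Wm Psi_def fm gm m_assoc sf sg cml ss' cm sf' sg')
  qed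
  have inj: "inj_on Psi (carrier (wreath_C2 H))"
  proof (rule inj_onI)
    fix x y assume x: "x \<in> carrier (wreath_C2 H)" and y: "y \<in> carrier (wreath_C2 H)"
      and eq: "Psi x = Psi y"
    obtain p q e1 where xx: "x = ((p, q), e1)" "p \<in> carrier H" "q \<in> carrier H" using x Wc by auto
    obtain c d e2 where yy: "y = ((c, d), e2)" "c \<in> carrier H" "d \<in> carrier H" using y Wc by auto
    define u where "u = f p \<otimes> g q"
    define v where "v = f c \<otimes> g d"
    have uE: "u \<in> E" using u_def subgroup.m_closed[OF E] A(2) fA BE gB xx by blast
    have vE: "v \<in> E" using v_def subgroup.m_closed[OF E] A(2) fA BE gB yy by blast
    have uc: "u \<in> carrier G" using uE Ec by blast
    have vc: "v \<in> carrier G" using vE Ec by blast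
    have eq': "u \<otimes> (if e1 then s else \<one>) = v \<otimes> (if e2 then s else \<one>)"
      using eq xx yy by (simp add: Psi_def u_def v_def)
    have uv: "u = v \<and> e1 = e2"
    proof (cases e1; cases e2)
      assume "e1" "\<not> e2"
      then have "u \<otimes> s = v" using eq' vc by simp
      then have "s = inv u \<otimes> v" using uc s by (metis cancel_l2)
      then have "s \<in> E" using uE vE subgroup.m_closed[OF E] subgroup.m_inv_closed[OF E] by simp
      then show ?thesis using s by simp
    next
      assume "\<not> e1" "e2"
      then have "u = v \<otimes> s" using eq' uc by simp
      then have "s = inv v \<otimes> u" using vc s by (metis cancel_l2)
      then have "s \<in> E" using uE vE subgroup.m_closed[OF E] subgroup.m_inv_closed[OF E] by simp
      then show ?thesis using s by simp
    qed (use eq' uc vc s in auto)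
    then have "f p = f c \<and> g q = g d"
      using uniq[OF fA[OF xx(2)] fA[OF yy(2)] gB[OF xx(3)] gB[OF yy(3)]] u_def v_def by simp
    then have "f p = f c \<and> f q = f d" using s fc xx yy by (simp add: g_def m_assoc)
    then have "p = c \<and> q = d" using f(2) xx yy by (simp add: inj_on_def)
    then show "x = y" using xx yy uv by simp
  qed
  have cardW: "card (carrier (wreath_C2 H)) = card (carrier G)"
  proof -
    have "card A = card (carrier H)" using f(2,3) card_image by blast
    then show ?thesis using cardG cardE Wc by (simp add: card_cartesian_product)
  qed
  have sub: "Psi ` carrier (wreath_C2 H) \<subseteq> carrier G" using Psic by blast
  have "card (Psi ` carrier (wreath_C2 H)) = card (carrier G)" using card_image[OF inj] cardW by simp
  then have img: "Psi ` carrier (wreath_C2 H) = carrier G"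
    using card_subset_eq[OF fin sub] by simp
  have iso: "Psi \<in> iso (wreath_C2 H) G"
    using hom inj img by (simp add: iso_def bij_betw_def)
  show ?thesis
  proof (rule iso_sym_closed[OF iso])
    fix x y assume "x \<in> carrier (wreath_C2 H)" "y \<in> carrier (wreath_C2 H)"
    then show "x \<otimes>\<^bsub>wreath_C2 H\<^esub> y \<in> carrier (wreath_C2 H)"
      by (auto simp: Wc Wm)
  qed
qed

end




lemma (in group) dirprod_split:
  assumes fin: "finite (carrier G)" and Kn: "K \<lhd> G" and H: "subgroup H G" and KH: "K \<subseteq> H"
    and cardKH: "card K < card H"
    and Hn: "H \<lhd> G \<Longrightarrow> H \<subseteq> K"
    and idx: "card (rcosets H) = 5"
    and dec: "\<And>h. h \<in> H \<Longrightarrow> \<exists>k\<in>K. \<exists>d\<in>carrier G. h = k \<otimes> d \<and> (\<forall>k'\<in>K. d \<otimes> k' = k' \<otimes> d)"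
    and ZK: "\<And>z. z \<in> K \<Longrightarrow> (\<forall>k\<in>K. z \<otimes> k = k \<otimes> z) \<Longrightarrow> z = \<one>"
  shows "G \<cong> (G Mod K) \<times>\<times> (G\<lparr>carrier := K\<rparr>)"
proof -
  have Ksg: "subgroup K G" using Kn normal_imp_subgroup by blast
  have Ks: "K \<subseteq> carrier G" using Ksg subgroup.subset by blast
  have Hs: "H \<subseteq> carrier G" using H subgroup.subset by blast
  have Kc: "k \<in> K \<Longrightarrow> k \<in> carrier G" for k using Ks by blast
  have Kmul: "a \<in> K \<Longrightarrow> b \<in> K \<Longrightarrow> a \<otimes> b \<in> K" for a b using subgroup.m_closed[OF Ksg] by blast
  have Kinv: "a \<in> K \<Longrightarrow> inv a \<in> K" for a using subgroup.m_inv_closed[OF Ksg] by blast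
  have Kconj: "g \<in> carrier G \<Longrightarrow> k \<in> K \<Longrightarrow> g \<otimes> k \<otimes> inv g \<in> K" for g k using normal_invE(2)[OF Kn] by blast
  define C where "C = {g \<in> carrier G. \<forall>k\<in>K. g \<otimes> k = k \<otimes> g}"
  have Cc: "c \<in> C \<Longrightarrow> c \<in> carrier G" for c by (simp add: C_def)
  have Ccomm: "c \<in> C \<Longrightarrow> k \<in> K \<Longrightarrow> k \<otimes> c = c \<otimes> k" for c k by (simp add: C_def)
  have Clc: "c \<in> C \<Longrightarrow> k \<in> K \<Longrightarrow> z \<in> carrier G \<Longrightarrow> k \<otimes> (c \<otimes> z) = c \<otimes> (k \<otimes> z)" for c k z
    using Ccomm Cc Kc by (metis m_assoc)
  have Cmul: "a \<in> C \<Longrightarrow> b \<in> C \<Longrightarrow> a \<otimes> b \<in> C" for a b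
  proof -
    assume a: "a \<in> C" and b: "b \<in> C"
    { fix k assume k: "k \<in> K"
      have e1: "b \<otimes> k = k \<otimes> b" using Ccomm[OF b k] by simp
      have e2: "a \<otimes> k = k \<otimes> a" using Ccomm[OF a k] by simp
      have "a \<otimes> b \<otimes> k = a \<otimes> (b \<otimes> k)" using a b k Cc Kc by (simp add: m_assoc)
      also have "\<dots> = (a \<otimes> k) \<otimes> b" using a b k Cc Kc e1 by (simp add: m_assoc)
      also have "\<dots> = k \<otimes> (a \<otimes> b)" using a b k Cc Kc e2 by (simp add: m_assoc)
      finally have "a \<otimes> b \<otimes> k = k \<otimes> (a \<otimes> b)" . }
    moreover have "a \<otimes> b \<in> carrier G" using a b Cc by blast
    ultimately show ?thesis unfolding C_def by blast
  qed
  have Cinv: "a \<in> C \<Longrightarrow> inv a \<in> C" for a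
  proof -
    assume a: "a \<in> C"
    { fix k assume k: "k \<in> K"
      have "a \<otimes> k = k \<otimes> a" using a k by (simp add: C_def)
      then have "inv a \<otimes> (a \<otimes> k) \<otimes> inv a = inv a \<otimes> (k \<otimes> a) \<otimes> inv a" by simp
      then have "inv a \<otimes> k = k \<otimes> inv a" using Cc[OF a] Kc[OF k] by (simp add: m_assoc) }
    moreover have "inv a \<in> carrier G" using a Cc by blast
    ultimately show "inv a \<in> C" unfolding C_def by blast
  qed
  have C1: "\<one> \<in> C" by (simp add: C_def Kc)
  have Cconj: "g \<in> carrier G \<Longrightarrow> c \<in> C \<Longrightarrow> g \<otimes> c \<otimes> inv g \<in> C" for g c
  proof -
    assume g: "g \<in> carrier G" and c: "c \<in> C"
    { fix k assume k: "k \<in> K"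
      define k' where "k' = inv g \<otimes> k \<otimes> g"
      have k': "k' \<in> K" using Kconj[of "inv g" k] g k by (simp add: k'_def)
      have "g \<otimes> c \<otimes> inv g \<otimes> k = g \<otimes> (c \<otimes> k') \<otimes> inv g"
        using g Cc[OF c] Kc[OF k] by (simp add: k'_def m_assoc)
      also have "\<dots> = g \<otimes> (k' \<otimes> c) \<otimes> inv g" using Ccomm[OF c k'] by simp
      also have "\<dots> = k \<otimes> (g \<otimes> c \<otimes> inv g)"
        using g Cc[OF c] Kc[OF k] by (simp add: k'_def m_assoc)
      finally have "g \<otimes> c \<otimes> inv g \<otimes> k = k \<otimes> (g \<otimes> c \<otimes> inv g)" . }
    moreover have "g \<otimes> c \<otimes> inv g \<in> carrier G" using g Cc[OF c] by simp
    ultimately show ?thesis unfolding C_def by blast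
  qed
  have CK: "z \<in> C \<Longrightarrow> z \<in> K \<Longrightarrow> z = \<one>" for z
    using ZK unfolding C_def by blast
  define M where "M = {x. \<exists>c\<in>C. \<exists>k\<in>K. x = c \<otimes> k}"
  have Msg: "subgroup M G"
  proof
    show "M \<subseteq> carrier G" using Cc Kc by (auto simp: M_def)
    show "\<one> \<in> M" unfolding M_def using C1 subgroup.one_closed[OF Ksg] by force
  next
    fix x y assume "x \<in> M" "y \<in> M"
    then obtain c1 k1 c2 k2 where xy: "c1 \<in> C" "k1 \<in> K" "x = c1 \<otimes> k1" "c2 \<in> C" "k2 \<in> K" "y = c2 \<otimes> k2"
      unfolding M_def by blast
    have "x \<otimes> y = (c1 \<otimes> c2) \<otimes> (k1 \<otimes> k2)"
      using xy Cc Kc by (simp add: m_assoc Clc)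
    then show "x \<otimes> y \<in> M" unfolding M_def using Cmul Kmul xy by blast
  next
    fix x assume "x \<in> M"
    then obtain c k where xx: "c \<in> C" "k \<in> K" "x = c \<otimes> k" unfolding M_def by blast
    have "inv x = inv c \<otimes> inv k" using xx Cc Kc Ccomm[OF Cinv[OF xx(1)] Kinv[OF xx(2)]]
      by (simp add: inv_mult_group)
    then show "inv x \<in> M" unfolding M_def using Cinv Kinv xx by blast
  qed
  have Mn: "M \<lhd> G"
  proof (rule normal_invI[OF Msg])
    fix g x assume g: "g \<in> carrier G" and "x \<in> M"
    then obtain c k where xx: "c \<in> C" "k \<in> K" "x = c \<otimes> k" unfolding M_def by blast
    have "g \<otimes> x \<otimes> inv g = (g \<otimes> c \<otimes> inv g) \<otimes> (g \<otimes> k \<otimes> inv g)"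
      using g xx Cc Kc by (simp add: m_assoc)
    then show "g \<otimes> x \<otimes> inv g \<in> M" unfolding M_def using Cconj Kconj g xx by blast
  qed
  have HM: "H \<subseteq> M"
  proof
    fix h assume "h \<in> H"
    then obtain k d where kd: "k \<in> K" "d \<in> carrier G" "h = k \<otimes> d" "\<forall>k'\<in>K. d \<otimes> k' = k' \<otimes> d"
      using dec by blast
    have dC: "d \<in> C" using kd unfolding C_def by blast
    have "h = d \<otimes> k" using kd by simp
    then show "h \<in> M" unfolding M_def using dC kd by blast
  qed
  have Ms: "M \<subseteq> carrier G" using Msg subgroup.subset by blast
  have finM: "finite M" using fin Ms finite_subset by blast
  have finH: "finite H" using fin Hs finite_subset by blast
  have l1: "card (rcosets M) * card M = card (carrier G)" using lagrange[OF Msg] by (simp add: order_def)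
  have l2: "card (rcosets H) * card H = card (carrier G)" using lagrange[OF H] by (simp add: order_def)
  have l3: "card (rcosets\<^bsub>G\<lparr>carrier := M\<rparr>\<^esub> H) * card H = card M"
    using group.lagrange[OF subgroup_imp_group[OF Msg] subgroup_incl[OF H Msg HM]] by (simp add: order_def)
  define r where "r = card (rcosets M)"
  define m where "m = card (rcosets\<^bsub>G\<lparr>carrier := M\<rparr>\<^esub> H)"
  have Hpos: "card H > 0" using cardKH by simp
  have "r * m * card H = 5 * card H" using l1 l2 l3 idx by (simp add: r_def m_def mult.assoc)
  then have "r * m = 5" using Hpos by simp
  then have rm: "r = 1 \<or> m = 1" using prod5 by blast
  have MG: "M = carrier G"
  proof (cases "r = 1")
    case True
    then have "card M = card (carrier G)" using l1 r_def by simp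
    then show ?thesis using card_subset_eq[OF fin Ms] by simp
  next
    case False
    then have "m = 1" using rm by simp
    then have "card H = card M" using l3 m_def by simp
    then have "H = M" using card_subset_eq[OF finM HM] by simp
    then have "H \<subseteq> K" using Hn Mn by simp
    then have "card H \<le> card K" by (rule card_mono[OF finite_subset[OF Ks fin]])
    then show ?thesis using cardKH by simp
  qed
  have pi_uniq: "k1 = k2" if "g \<in> carrier G" "k1 \<in> K" "g \<otimes> inv k1 \<in> C" "k2 \<in> K" "g \<otimes> inv k2 \<in> C" for g k1 k2
  proof -
    have "inv (g \<otimes> inv k1) \<otimes> (g \<otimes> inv k2) = k1 \<otimes> inv k2"
      using that Kc by (simp add: inv_mult_group m_assoc)
    moreover have "inv (g \<otimes> inv k1) \<otimes> (g \<otimes> inv k2) \<in> C" using Cmul Cinv that by blast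
    moreover have "k1 \<otimes> inv k2 \<in> K" using Kmul Kinv that by blast
    ultimately have "k1 \<otimes> inv k2 = \<one>" using CK by simp
    then show ?thesis using that Kc by (metis inv_equality inv_inv inv_closed r_inv
          cancel_l2 r_one)
  qed
  define pi where "pi = (\<lambda>g. THE k. k \<in> K \<and> g \<otimes> inv k \<in> C)"
  have pi_ex: "\<exists>k. k \<in> K \<and> g \<otimes> inv k \<in> C" if g: "g \<in> carrier G" for g
  proof -
    obtain c k where ck: "c \<in> C" "k \<in> K" "g = c \<otimes> k" using g MG M_def by blast
    have "g \<otimes> inv k = c" using ck Cc Kc by (simp add: m_assoc)
    then show ?thesis using ck by blast
  qed
  have pi_eq: "pi g = k" if "g \<in> carrier G" "k \<in> K" "g \<otimes> inv k \<in> C" for g k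
    unfolding pi_def using that pi_uniq by blast
  have pi_prop: "pi g \<in> K \<and> g \<otimes> inv (pi g) \<in> C" if g: "g \<in> carrier G" for g
    using pi_ex[OF g] pi_eq[OF g] by metis
  have pi_mult: "pi (g1 \<otimes> g2) = pi g1 \<otimes> pi g2" if g: "g1 \<in> carrier G" "g2 \<in> carrier G" for g1 g2
  proof -
    define k1 where "k1 = pi g1"
    define k2 where "k2 = pi g2"
    define c1 where "c1 = g1 \<otimes> inv k1"
    define c2 where "c2 = g2 \<otimes> inv k2"
    have kk: "k1 \<in> K" "k2 \<in> K" "c1 \<in> C" "c2 \<in> C" using pi_prop g k1_def k2_def c1_def c2_def by auto
    have g1: "g1 = c1 \<otimes> k1" using g kk Kc by (simp add: c1_def m_assoc)
    have g2: "g2 = c2 \<otimes> k2" using g kk Kc by (simp add: c2_def m_assoc)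
    have "(c1 \<otimes> k1) \<otimes> (c2 \<otimes> k2) \<otimes> inv (k1 \<otimes> k2) = c1 \<otimes> c2"
      using kk Kc Cc by (simp add: m_assoc inv_mult_group Clc)
    then have "g1 \<otimes> g2 \<otimes> inv (k1 \<otimes> k2) \<in> C" using g1 g2 Cmul kk by simp
    then show ?thesis using pi_eq[of "g1 \<otimes> g2" "k1 \<otimes> k2"] Kmul kk g k1_def k2_def by simp
  qed
  define Phi where "Phi = (\<lambda>g. (K #> g, pi g))"
  have modc: "carrier (G Mod K) = rcosets K" by (simp add: FactGroup_def)
  have hom: "Phi \<in> hom G ((G Mod K) \<times>\<times> (G\<lparr>carrier := K\<rparr>))"
  proof (rule homI)
    fix g assume g: "g \<in> carrier G"
    show "Phi g \<in> carrier ((G Mod K) \<times>\<times> (G\<lparr>carrier := K\<rparr>))"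
      using g pi_prop[OF g] rcosetsI[OF Ks g] by (simp add: Phi_def modc)
  next
    fix x y assume x: "x \<in> carrier G" and y: "y \<in> carrier G"
    show "Phi (x \<otimes> y) = Phi x \<otimes>\<^bsub>(G Mod K) \<times>\<times> (G\<lparr>carrier := K\<rparr>)\<^esub> Phi y"
      using x y pi_mult normal.rcos_sum[OF Kn x y] by (simp add: Phi_def)
  qed
  have inj: "inj_on Phi (carrier G)"
  proof (rule inj_onI)
    fix x y assume x: "x \<in> carrier G" and y: "y \<in> carrier G" and eq: "Phi x = Phi y"
    have "K #> x = K #> y" using eq by (simp add: Phi_def)
    then have "K #> (x \<otimes> inv y) = K" using coset_mult_inv2 x y Ks by blast
    then have xyK: "x \<otimes> inv y \<in> K" using coset_join1 x y Ksg by blast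
    define k where "k = pi x"
    have ky: "k = pi y" using eq k_def by (simp add: Phi_def)
    have cx: "x \<otimes> inv k \<in> C" and cy: "y \<otimes> inv k \<in> C" and kK: "k \<in> K"
      using pi_prop[OF x] pi_prop[OF y] k_def ky by auto
    have "x \<otimes> inv y = (x \<otimes> inv k) \<otimes> inv (y \<otimes> inv k)"
      using x y Kc[OF kK] by (simp add: inv_mult_group m_assoc)
    then have "x \<otimes> inv y \<in> C" using Cmul Cinv cx cy by simp
    then have "x \<otimes> inv y = \<one>" using CK xyK by blast
    then show "x = y" using x y by (metis inv_equality inv_inv inv_closed)
  qed
  have finR: "finite (rcosets K)" using finite_subset[OF rcosets_subset_PowG[OF Ksg]] fin by blast
  have finK: "finite K" using fin Ks finite_subset by blast
  have cardP: "card (carrier ((G Mod K) \<times>\<times> (G\<lparr>carrier := K\<rparr>))) = card (carrier G)"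
    using lagrange[OF Ksg] by (simp add: modc card_cartesian_product order_def)
  have finP: "finite (carrier ((G Mod K) \<times>\<times> (G\<lparr>carrier := K\<rparr>)))" 
  proof -
    have "carrier ((G Mod K) \<times>\<times> (G\<lparr>carrier := K\<rparr>)) = (rcosets K) \<times> K" by (simp add: modc)
    then show ?thesis using finR finK by simp
  qed
  have sub: "Phi ` carrier G \<subseteq> carrier ((G Mod K) \<times>\<times> (G\<lparr>carrier := K\<rparr>))"
    by (rule image_subsetI, rule hom_in_carrier[OF hom])
  have "card (Phi ` carrier G) = card (carrier ((G Mod K) \<times>\<times> (G\<lparr>carrier := K\<rparr>)))"
    using card_image[OF inj] cardP by simp
  then have img: "Phi ` carrier G = carrier ((G Mod K) \<times>\<times> (G\<lparr>carrier := K\<rparr>))"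
    using card_subset_eq[OF finP sub] by simp
  show ?thesis unfolding is_iso_def iso_def bij_betw_def using hom inj img by blast
qed




theorem mainTheorem13:
  fixes Gx :: "'a monoid" and Ge :: "'b monoid" and Gxy :: "'c monoid"
    and ix :: "'c \<Rightarrow> 'a" and ie :: "'c \<Rightarrow> 'b" and t :: 'b
  assumes grp: "group Gx" "group Ge" "group Gxy"
    and fin: "finite (carrier Gx)" "finite (carrier Ge)"
    and ix: "ix \<in> hom Gxy Gx" "inj_on ix (carrier Gxy)"
    and ie: "ie \<in> hom Gxy Ge" "inj_on ie (carrier Gxy)"
    and deg_x: "card (rcosets\<^bsub>Gx\<^esub> (ix ` carrier Gxy)) = 5"
    and deg_e: "card (rcosets\<^bsub>Ge\<^esub> (ie ` carrier Gxy)) = 2"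
    and primitive: "\<And>N. subgroup N Gxy \<Longrightarrow> ix ` N \<lhd> Gx \<Longrightarrow> ie ` N \<lhd> Ge \<Longrightarrow> N = {\<one>\<^bsub>Gxy\<^esub>}"
    and t: "t \<in> carrier Ge" "t \<notin> ie ` carrier Gxy"
    and Gxy1: "{b \<in> carrier Gxy. ix b \<in> coset_action_kernel Gx (ix ` carrier Gxy)}
               \<inter> {b \<in> carrier Gxy. \<exists>k \<in> carrier Gxy.
                    ix k \<in> coset_action_kernel Gx (ix ` carrier Gxy) \<and>
                    ie b = inv\<^bsub>Ge\<^esub> t \<otimes>\<^bsub>Ge\<^esub> ie k \<otimes>\<^bsub>Ge\<^esub> t}
             = {\<one>\<^bsub>Gxy\<^esub>}"
    and quot: "Gx Mod (coset_action_kernel Gx (ix ` carrier Gxy)) \<cong> sym_group 5"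
    and kern: "Gx\<lparr>carrier := coset_action_kernel Gx (ix ` carrier Gxy)\<rparr> \<cong> sym_group 4"
  shows "Gx \<cong> DirProd (sym_group 5) (sym_group 4) \<and> Ge \<cong> wreath_C2 (sym_group 4)"
proof -
  interpret Gx: group Gx by (rule grp(1))
  interpret Ge: group Ge by (rule grp(2))
  interpret Gxy: group Gxy by (rule grp(3))
  interpret IX: group_hom Gxy Gx ix using grp ix(1) by (simp add: group_hom_def group_hom_axioms_def)
  interpret IE: group_hom Gxy Ge ie using grp ie(1) by (simp add: group_hom_def group_hom_axioms_def)
  define H where "H = ix ` carrier Gxy"
  define K where "K = coset_action_kernel Gx H"
  have Hsg: "subgroup H Gx" using IX.img_is_subgroup H_def by simp
  have Kn: "K \<lhd> Gx" using Gx.cak_normal[OF Hsg] K_def by simp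
  have Ksg: "subgroup K Gx" using Kn normal_imp_subgroup by blast
  have KH: "K \<subseteq> H" using Gx.cak_sub[OF Hsg] K_def by simp
  have Ks: "K \<subseteq> carrier Gx" using Ksg subgroup.subset by blast
  obtain beta where beta: "beta \<in> iso (Gx\<lparr>carrier := K\<rparr>) (sym_group 4)"
    using kern K_def H_def by (auto simp: is_iso_def)
  obtain alpha where alpha: "alpha \<in> iso (Gx Mod K) (sym_group 5)"
    using quot K_def H_def by (auto simp: is_iso_def)
  have cardK: "card K = 24"
  proof -
    have "bij_betw beta K (carrier (sym_group 4))" using beta by (simp add: iso_def)
    then have "card K = card (carrier (sym_group 4))" by (rule bij_betw_same_card)
    then show ?thesis by (simp add: card_sym_group fact_numeral)
  qed
  have cardRK: "card (rcosets\<^bsub>Gx\<^esub> K) = 120"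
  proof -
    have "bij_betw alpha (carrier (Gx Mod K)) (carrier (sym_group 5))" using alpha by (simp add: iso_def)
    then have "card (carrier (Gx Mod K)) = card (carrier (sym_group 5))" by (rule bij_betw_same_card)
    then show ?thesis by (simp add: card_sym_group fact_numeral FactGroup_def)
  qed
  have ordGx: "card (carrier Gx) = 2880" using Gx.lagrange[OF Ksg] cardK cardRK by (simp add: order_def)
  have cardH: "card H = 576" using Gx.lagrange[OF Hsg] ordGx deg_x H_def by (simp add: order_def)
  have cardGxy: "card (carrier Gxy) = 576" using card_image[OF ix(2)] cardH H_def by simp
  define Lx where "Lx = {b \<in> carrier Gxy. ix b \<in> K}"
  have Lxs: "Lx \<subseteq> carrier Gxy" by (auto simp: Lx_def)
  have ixLx: "ix ` Lx = K" using KH H_def by (auto simp: Lx_def)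
  have injLx: "inj_on ix Lx" using inj_on_subset[OF ix(2) Lxs] .
  have cardLx: "card Lx = 24" using card_image[OF injLx] ixLx cardK by simp
  have Lxsg: "subgroup Lx Gxy"
  proof (rule Gxy.subgroupI)
    show "Lx \<subseteq> carrier Gxy" by (rule Lxs)
    show "Lx \<noteq> {}" using subgroup.one_closed[OF Ksg] by (auto simp: Lx_def intro!: exI[of _ "\<one>\<^bsub>Gxy\<^esub>"])
  next
    fix a assume "a \<in> Lx" then show "inv\<^bsub>Gxy\<^esub> a \<in> Lx"
      using subgroup.m_inv_closed[OF Ksg] by (auto simp: Lx_def)
  next
    fix a b assume "a \<in> Lx" "b \<in> Lx" then show "a \<otimes>\<^bsub>Gxy\<^esub> b \<in> Lx"
      using subgroup.m_closed[OF Ksg] by (auto simp: Lx_def)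
  qed
  define E where "E = ie ` carrier Gxy"
  define A where "A = ie ` Lx"
  define B where "B = (\<lambda>y. inv\<^bsub>Ge\<^esub> t \<otimes>\<^bsub>Ge\<^esub> y \<otimes>\<^bsub>Ge\<^esub> t) ` A"
  have Esg: "subgroup E Ge" using IE.img_is_subgroup E_def by simp
  have Asg: "subgroup A Ge" using IE.subgroup_img_is_subgroup[OF Lxsg] A_def by simp
  have AE: "A \<subseteq> E" using Lxs A_def E_def by auto
  have cardE: "card E = 576" using card_image[OF ie(2)] cardGxy E_def by simp
  have cardA: "card A = 24" using card_image[OF inj_on_subset[OF ie(2) Lxs]] cardLx A_def by simp
  have nA: "e \<otimes>\<^bsub>Ge\<^esub> a \<otimes>\<^bsub>Ge\<^esub> inv\<^bsub>Ge\<^esub> e \<in> A" if ea: "e \<in> E" "a \<in> A" for e a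
  proof -
    obtain g l where gl: "g \<in> carrier Gxy" "e = ie g" "l \<in> Lx" "a = ie l"
      using ea E_def A_def by auto
    have lc: "l \<in> carrier Gxy" using gl Lxs by blast
    have "ix (g \<otimes>\<^bsub>Gxy\<^esub> l \<otimes>\<^bsub>Gxy\<^esub> inv\<^bsub>Gxy\<^esub> g) = ix g \<otimes>\<^bsub>Gx\<^esub> ix l \<otimes>\<^bsub>Gx\<^esub> inv\<^bsub>Gx\<^esub> (ix g)"
      using gl lc by simp
    also have "\<dots> \<in> K" using Gx.normal_invE(2)[OF Kn] gl lc Lx_def by simp
    finally have "g \<otimes>\<^bsub>Gxy\<^esub> l \<otimes>\<^bsub>Gxy\<^esub> inv\<^bsub>Gxy\<^esub> g \<in> Lx" using gl lc by (simp add: Lx_def)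
    moreover have "ie (g \<otimes>\<^bsub>Gxy\<^esub> l \<otimes>\<^bsub>Gxy\<^esub> inv\<^bsub>Gxy\<^esub> g) = e \<otimes>\<^bsub>Ge\<^esub> a \<otimes>\<^bsub>Ge\<^esub> inv\<^bsub>Ge\<^esub> e"
      using gl lc by simp
    ultimately show ?thesis using A_def by (metis imageI)
  qed
  have AB: "x = \<one>\<^bsub>Ge\<^esub>" if xab: "x \<in> A" "x \<in> B" for x
  proof -
    obtain b where b: "b \<in> Lx" "x = ie b" using xab(1) A_def by auto
    obtain y where y: "y \<in> A" "x = inv\<^bsub>Ge\<^esub> t \<otimes>\<^bsub>Ge\<^esub> y \<otimes>\<^bsub>Ge\<^esub> t" using xab(2) B_def by auto
    obtain k where k: "k \<in> Lx" "y = ie k" using y(1) A_def by auto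
    have "b \<in> {b \<in> carrier Gxy. ix b \<in> coset_action_kernel Gx (ix ` carrier Gxy)}
               \<inter> {b \<in> carrier Gxy. \<exists>k \<in> carrier Gxy.
                    ix k \<in> coset_action_kernel Gx (ix ` carrier Gxy) \<and>
                    ie b = inv\<^bsub>Ge\<^esub> t \<otimes>\<^bsub>Ge\<^esub> ie k \<otimes>\<^bsub>Ge\<^esub> t}"
      using b k y by (auto simp: Lx_def K_def H_def)
    then have "b = \<one>\<^bsub>Gxy\<^esub>" using Gxy1 by blast
    then show ?thesis using b by simp
  qed
  have Wax: "wr_setup Ge E t A B"
  proof (rule wr_setup.intro[OF grp(2)], rule wr_setup_axioms.intro)
    show "finite (carrier Ge)" by (rule fin(2))
    show "subgroup E Ge" by (rule Esg)
    show "card (rcosets\<^bsub>Ge\<^esub> E) = 2" using deg_e E_def by simp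
    show "t \<in> carrier Ge" by (rule t(1))
    show "t \<notin> E" using t(2) E_def by simp
    show "subgroup A Ge" by (rule Asg)
    show "A \<subseteq> E" by (rule AE)
    show "\<And>e a. e \<in> E \<Longrightarrow> a \<in> A \<Longrightarrow> e \<otimes>\<^bsub>Ge\<^esub> a \<otimes>\<^bsub>Ge\<^esub> inv\<^bsub>Ge\<^esub> e \<in> A" by (rule nA)
    show "B = (\<lambda>y. inv\<^bsub>Ge\<^esub> t \<otimes>\<^bsub>Ge\<^esub> y \<otimes>\<^bsub>Ge\<^esub> t) ` A" by (rule B_def)
    show "\<And>x. x \<in> A \<Longrightarrow> x \<in> B \<Longrightarrow> x = \<one>\<^bsub>Ge\<^esub>" by (rule AB)
    show "card E = card A * card A" using cardE cardA by simp
  qed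
  interpret W: wr_setup Ge E t A B by (rule Wax)
  have Kgrp: "group (Gx\<lparr>carrier := K\<rparr>)" using Gx.subgroup_imp_group[OF Ksg] .
  have Lgrp: "group (Gxy\<lparr>carrier := Lx\<rparr>)" using Gxy.subgroup_imp_group[OF Lxsg] .
  have beta': "inv_into K beta \<in> iso (sym_group 4) (Gx\<lparr>carrier := K\<rparr>)"
    using group.iso_set_sym[OF Kgrp beta] by simp
  have ixiso: "ix \<in> iso (Gxy\<lparr>carrier := Lx\<rparr>) (Gx\<lparr>carrier := K\<rparr>)"
  proof (rule isoI)
    show "ix \<in> hom (Gxy\<lparr>carrier := Lx\<rparr>) (Gx\<lparr>carrier := K\<rparr>)"
      using Lxs by (auto simp: hom_def Lx_def intro: IX.hom_mult)
    show "bij_betw ix (carrier (Gxy\<lparr>carrier := Lx\<rparr>)) (carrier (Gx\<lparr>carrier := K\<rparr>))"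
      using injLx ixLx by (simp add: bij_betw_def)
  qed
  have iota: "inv_into Lx ix \<in> iso (Gx\<lparr>carrier := K\<rparr>) (Gxy\<lparr>carrier := Lx\<rparr>)"
    using group.iso_set_sym[OF Lgrp ixiso] by simp
  have iehom: "ie \<in> hom (Gxy\<lparr>carrier := Lx\<rparr>) Ge"
    using Lxs by (auto simp: hom_def intro!: IE.hom_mult)
  define f where "f = ie \<circ> inv_into Lx ix \<circ> inv_into K beta"
  have fhom: "f \<in> hom (sym_group 4) Ge"
    unfolding f_def
    by (rule hom_compose[OF iso_imp_homomorphism[OF beta'] hom_compose[OF iso_imp_homomorphism[OF iota] iehom]])
  have b1: "bij_betw (inv_into K beta) (carrier (sym_group 4)) K" using beta' by (simp add: iso_def)
  have b2: "bij_betw (inv_into Lx ix) K Lx" using iota by (simp add: iso_def)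
  have b3: "bij_betw ie Lx A" using inj_on_subset[OF ie(2) Lxs] A_def by (simp add: bij_betw_def)
  have fb: "bij_betw f (carrier (sym_group 4)) A"
    unfolding f_def using bij_betw_trans[OF b1 bij_betw_trans[OF b2 b3]] by (simp add: comp_assoc)
  have part2: "Ge \<cong> wreath_C2 (sym_group 4)"
    using W.wreath_iso[OF sym_group_is_group fhom] fb by (simp add: bij_betw_def)
  have dec: "\<exists>k\<in>K. \<exists>d\<in>carrier Gx. h = k \<otimes>\<^bsub>Gx\<^esub> d \<and> (\<forall>k'\<in>K. d \<otimes>\<^bsub>Gx\<^esub> k' = k' \<otimes>\<^bsub>Gx\<^esub> d)"
    if h: "h \<in> H" for h
  proof -
    obtain g where g: "g \<in> carrier Gxy" "h = ix g" using h H_def by auto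
    obtain a b where ab: "a \<in> A" "b \<in> B" "ie g = a \<otimes>\<^bsub>Ge\<^esub> b" using W.decomp[of "ie g"] g E_def by auto
    obtain l1 where l1: "l1 \<in> Lx" "a = ie l1" using ab A_def by auto
    obtain l2 where l2: "l2 \<in> carrier Gxy" "b = ie l2" using W.BE[OF ab(2)] E_def by auto
    have l1c: "l1 \<in> carrier Gxy" using l1 Lxs by blast
    have "ie g = ie (l1 \<otimes>\<^bsub>Gxy\<^esub> l2)" using ab l1 l2 l1c by simp
    then have gl: "g = l1 \<otimes>\<^bsub>Gxy\<^esub> l2" using ie(2) g l1c l2 by (simp add: inj_on_def)
    have kk: "ix l1 \<in> K" using l1 Lx_def by simp
    have "\<forall>k'\<in>K. ix l2 \<otimes>\<^bsub>Gx\<^esub> k' = k' \<otimes>\<^bsub>Gx\<^esub> ix l2"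
    proof
      fix k' assume "k' \<in> K"
      then obtain l where l: "l \<in> Lx" "k' = ix l" using ixLx by auto
      have lc: "l \<in> carrier Gxy" using l Lxs by blast
      have "b \<otimes>\<^bsub>Ge\<^esub> ie l = ie l \<otimes>\<^bsub>Ge\<^esub> b" using W.comm[of "ie l" b] l ab A_def by simp
      then have "ie (l2 \<otimes>\<^bsub>Gxy\<^esub> l) = ie (l \<otimes>\<^bsub>Gxy\<^esub> l2)" using l2 lc by simp
      then have "l2 \<otimes>\<^bsub>Gxy\<^esub> l = l \<otimes>\<^bsub>Gxy\<^esub> l2" using ie(2) l2 lc by (simp add: inj_on_def)
      then show "ix l2 \<otimes>\<^bsub>Gx\<^esub> k' = k' \<otimes>\<^bsub>Gx\<^esub> ix l2" using l l2 lc by (metis IX.hom_mult)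
    qed
    moreover have "h = ix l1 \<otimes>\<^bsub>Gx\<^esub> ix l2" using g gl l1c l2 by simp
    ultimately show ?thesis using kk IX.hom_closed[OF l2(1)] by blast
  qed
  have ZK: "z = \<one>\<^bsub>Gx\<^esub>" if z: "z \<in> K" "\<forall>k\<in>K. z \<otimes>\<^bsub>Gx\<^esub> k = k \<otimes>\<^bsub>Gx\<^esub> z" for z
  proof -
    interpret BH: group_hom "Gx\<lparr>carrier := K\<rparr>" "sym_group 4" beta
      using Kgrp sym_group_is_group beta by (simp add: group_hom_def group_hom_axioms_def iso_def)
    have bs: "beta ` K = carrier (sym_group 4)" using beta by (simp add: iso_def bij_betw_def)
    have binj: "inj_on beta K" using beta by (simp add: iso_def bij_betw_def)
    have bz: "beta z permutes {1..4}" using z(1) bs by (auto simp: sym_group_carrier)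
    have "beta z \<circ> q = q \<circ> beta z" if q: "q permutes {1..4}" for q
    proof -
      obtain k where k: "k \<in> K" "q = beta k" using q bs by (metis imageE sym_group_carrier)
      have "beta (z \<otimes>\<^bsub>Gx\<lparr>carrier := K\<rparr>\<^esub> k) = beta (k \<otimes>\<^bsub>Gx\<lparr>carrier := K\<rparr>\<^esub> z)" using z k by simp
      then show ?thesis using z k BH.hom_mult[of z k] BH.hom_mult[of k z] by (simp add: sym_group_mult)
    qed
    then have "beta z = id" using S4_center[OF bz] by blast
    then have "beta z = beta \<one>\<^bsub>Gx\<^esub>" using BH.hom_one by (simp add: sym_group_one)
    then show ?thesis using binj z(1) subgroup.one_closed[OF Ksg] by (simp add: inj_on_def)
  qed
  have p1: "Gx \<cong> (Gx Mod K) \<times>\<times> (Gx\<lparr>carrier := K\<rparr>)"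
  proof (rule Gx.dirprod_split[OF fin(1) Kn Hsg KH])
    show "card K < card H" using cardK cardH by simp
    show "H \<lhd> Gx \<Longrightarrow> H \<subseteq> K" using Gx.cak_normal_sub K_def by simp
    show "card (rcosets\<^bsub>Gx\<^esub> H) = 5" using deg_x H_def by simp
    show "\<And>h. h \<in> H \<Longrightarrow> \<exists>k\<in>K. \<exists>d\<in>carrier Gx. h = k \<otimes>\<^bsub>Gx\<^esub> d \<and> (\<forall>k'\<in>K. d \<otimes>\<^bsub>Gx\<^esub> k' = k' \<otimes>\<^bsub>Gx\<^esub> d)"
      by (rule dec)
    show "\<And>z. z \<in> K \<Longrightarrow> \<forall>k\<in>K. z \<otimes>\<^bsub>Gx\<^esub> k = k \<otimes>\<^bsub>Gx\<^esub> z \<Longrightarrow> z = \<one>\<^bsub>Gx\<^esub>" by (rule ZK)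
  qed
  have p2: "(Gx Mod K) \<times>\<times> (Gx\<lparr>carrier := K\<rparr>) \<cong> sym_group 5 \<times>\<times> sym_group 4"
    using group.DirProd_iso_trans[OF normal.factorgroup_is_group[OF Kn]] quot kern K_def H_def by simp
  have part1: "Gx \<cong> DirProd (sym_group 5) (sym_group 4)" using iso_trans[OF p1 p2] .
  show ?thesis using part1 part2 by simp
qed


end
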